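(* Let $(\zeta_t)_{t\ge0}$ be the multi-species ASEP with one open boundary on $[N]$ described in the context, started from an arbitrary configuration in $\{1,2,3,\infty\}^N$. Let $\bar\zeta_t\in\{0,1\}^N$ be defined by $\bar\zeta_t(x)=1$ if $\zeta_t(x)\in\{1,2\}$ and $\bar\zeta_t(x)=0$ if $\zeta_t(x)\in\{3,\infty\}$. Then $(\bar\zeta_t)_{t\ge0}$ has the law of an ASEP with one open boundary on $[N]$ with parameters $q,\alpha,\gamma$.
   Context: Parameters: $q\in(0,1)$, $\alpha>\gamma>0$. The ASEP with one open boundary on $[N]$ is the Markov chain on $\{0,1\}^N$ in which a particle at $x$ jumps to $x+1$ at rate $1$ and to $x-1$ at rate $q$, provided the target is a vacant site in $[N]$. In addition, a particle is created at site $1$ at rate $\alpha$ if site $1$ is vacant, and removed at rate $\gamma$ if site $1$ is occupied. Multi-species ASEP: the state space is $\{1,2,3,\infty\}^N$, with total order $1>_p2>_p3>_p\infty$ (values $1,2,3$ are first, second and third class particles, $\infty$ a hole). Each edge $\{x,x+1\}$, $x\in[N-1]$, carries independent rate-$1$ and rate-$q$ Poisson clocks. When the rate-$1$ clock rings, the two values on the edge are sorted so that the $>_p$-larger value is at $x+1$. When the rate-$q$ clock rings, they are sorted so that the $>_p$-larger value is at $x$. Site $1$ carries a rate-$\alpha$ clock and a rate-$\gamma$ clock. When the rate-$\alpha$ clock rings, a value $\infty$ at site $1$ becomes $1$ and a value $3$ becomes $2$. When the rate-$\gamma$ clock rings, a value $1$ at site $1$ becomes $\infty$ and a value $2$ becomes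 $3$. Other values at site $1$ are unchanged. *)

theory Defs
  imports Complex_Main
begin

definition mat_mult :: "'s set \<Rightarrow> ('s \<Rightarrow> 's \<Rightarrow> real) \<Rightarrow> ('s \<Rightarrow> 's \<Rightarrow> real) \<Rightarrow> 's \<Rightarrow> 's \<Rightarrow> real" where
  "mat_mult S A B = (\<lambda>x y. \<Sum>z\<in>S. A x z * B z y)"

fun mat_pow :: "'s set \<Rightarrow> ('s \<Rightarrow> 's \<Rightarrow> real) \<Rightarrow> nat \<Rightarrow> 's \<Rightarrow> 's \<Rightarrow> real" where
  "mat_pow S A 0 = (\<lambda>x y. if x = y then 1 else 0)"
| "mat_pow S A (Suc n) = mat_mult S (mat_pow S A n) A"

definition trans_sg :: "'s set \<Rightarrow> ('s \<Rightarrow> 's \<Rightarrow> real) \<Rightarrow> real \<Rightarrow> 's \<Rightarrow> 's \<Rightarrow> real" where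
  "trans_sg S Q t x y = (\<Sum>n. t ^ n / fact n * mat_pow S Q n x y)"

text \<open>Finite-dimensional distributions of the chain started at x at time s:
  fdd S Q x s [(t1,A1),...,(tk,Ak)] = P_x(X_{t1} \<in> A1, ..., X_{tk} \<in> Ak)
  for s \<le> t1 \<le> ... \<le> tk.\<close>
fun fdd :: "'s set \<Rightarrow> ('s \<Rightarrow> 's \<Rightarrow> real) \<Rightarrow> 's \<Rightarrow> real \<Rightarrow> (real \<times> 's set) list \<Rightarrow> real" where
  "fdd S Q x s [] = 1"
| "fdd S Q x s ((t, A) # rest) =
     (\<Sum>y\<in>S \<inter> A. trans_sg S Q (t - s) x y * fdd S Q y t rest)"

text \<open>Generator of a chain driven by Poisson clocks: clock c rings at rate r_c and
  applies the deterministic map T_c.  Q x y = sum_c r_c ([T_c x = y] - [x = y]).\<close>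
definition ind :: "bool \<Rightarrow> real" where "ind b = (if b then 1 else 0)"

definition clock_gen :: "(real \<times> ('s \<Rightarrow> 's)) list \<Rightarrow> 's \<Rightarrow> 's \<Rightarrow> real" where
  "clock_gen cs x y = (\<Sum>(r, T)\<leftarrow>cs. r * (ind (T x = y) - ind (x = y)))"

text \<open>Sites [N] = {1..N} are list indices 0..N-1 (site 1 = index 0).
  Values 1,2,3,infinity.\<close>
datatype species = Fst | Snd | Thd | Hole

fun prank :: "species \<Rightarrow> nat" where
  "prank Fst = 0" | "prank Snd = 1" | "prank Thd = 2" | "prank Hole = 3"

definition pgt :: "species \<Rightarrow> species \<Rightarrow> bool" where
  "pgt a b \<longleftrightarrow> prank a < prank b"

definition swap_at :: "nat \<Rightarrow> 'a list \<Rightarrow> 'a list" where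
  "swap_at i xs = xs[i := xs ! Suc i, Suc i := xs ! i]"

definition ms_right :: "nat \<Rightarrow> species list \<Rightarrow> species list" where
  "ms_right i z = (if pgt (z ! i) (z ! Suc i) then swap_at i z else z)"
definition ms_left :: "nat \<Rightarrow> species list \<Rightarrow> species list" where
  "ms_left i z = (if pgt (z ! Suc i) (z ! i) then swap_at i z else z)"

fun ms_alpha :: "species list \<Rightarrow> species list" where
  "ms_alpha [] = []"
| "ms_alpha (a # z) = (case a of Hole \<Rightarrow> Fst | Thd \<Rightarrow> Snd | _ \<Rightarrow> a) # z"

fun ms_gamma :: "species list \<Rightarrow> species list" where
  "ms_gamma [] = []"
| "ms_gamma (a # z) = (case a of Fst \<Rightarrow> Hole | Snd \<Rightarrow> Thd | _ \<Rightarrow> a) # z"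

definition ms_states :: "nat \<Rightarrow> species list set" where
  "ms_states N = {z. length z = N}"

definition ms_gen :: "nat \<Rightarrow> real \<Rightarrow> real \<Rightarrow> real \<Rightarrow> species list \<Rightarrow> species list \<Rightarrow> real" where
  "ms_gen N q \<alpha> \<gamma> = clock_gen
     (concat (map (\<lambda>i. [(1, ms_right i), (q, ms_left i)]) [0..<N - 1])
      @ [(\<alpha>, ms_alpha), (\<gamma>, ms_gamma)])"

text \<open>Configurations in {0,1}^N as bool lists (True = particle).\<close>
definition as_right :: "nat \<Rightarrow> bool list \<Rightarrow> bool list" where
  "as_right i z = (if z ! i \<and> \<not> z ! Suc i then swap_at i z else z)"
definition as_left :: "nat \<Rightarrow> bool list \<Rightarrow> bool list" where
  "as_left i z = (if z ! Suc i \<and> \<not> z ! i then swap_at i z else z)"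

fun as_create :: "bool list \<Rightarrow> bool list" where
  "as_create [] = []" | "as_create (a # z) = (if \<not> a then True # z else a # z)"
fun as_remove :: "bool list \<Rightarrow> bool list" where
  "as_remove [] = []" | "as_remove (a # z) = (if a then False # z else a # z)"

definition asep_states :: "nat \<Rightarrow> bool list set" where
  "asep_states N = {z. length z = N}"

definition asep_gen :: "nat \<Rightarrow> real \<Rightarrow> real \<Rightarrow> real \<Rightarrow> bool list \<Rightarrow> bool list \<Rightarrow> real" where
  "asep_gen N q \<alpha> \<gamma> = clock_gen
     (concat (map (\<lambda>i. [(1, as_right i), (q, as_left i)]) [0..<N - 1])
      @ [(\<alpha>, as_create), (\<gamma>, as_remove)])"

definition proj :: "species list \<Rightarrow> bool list" where
  "proj z = map (\<lambda>a. a = Fst \<or> a = Snd) z"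

end

theory Submission
  imports Defs
begin

section \<open>Generic lumpability\<close>

lemma mat_pow_bound:
  fixes Q :: "'s \<Rightarrow> 's \<Rightarrow> real"
  assumes fin: "finite S" and R: "\<And>x y. \<bar>Q x y\<bar> \<le> R"
  shows "\<bar>mat_pow S Q n x y\<bar> \<le> (max 1 (real (card S) * R)) ^ n"
proof (induction n arbitrary: y)
  case 0
  then show ?case by simp
next
  case (Suc n)
  define K where "K = max 1 (real (card S) * R)"
  have R0: "0 \<le> R" using R[of x x] by linarith
  have "\<bar>mat_pow S Q (Suc n) x y\<bar> = \<bar>\<Sum>z\<in>S. mat_pow S Q n x z * Q z y\<bar>"
    by (simp add: mat_mult_def)
  also have "\<dots> \<le> (\<Sum>z\<in>S. \<bar>mat_pow S Q n x z * Q z y\<bar>)" by (rule sum_abs)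
  also have "\<dots> \<le> (\<Sum>z\<in>S. K ^ n * R)"
  proof (rule sum_mono)
    fix z assume "z \<in> S"
    have "\<bar>mat_pow S Q n x z\<bar> * \<bar>Q z y\<bar> \<le> K ^ n * R"
      using Suc.IH[of z] R[of z y] unfolding K_def
      by (intro mult_mono) auto
    then show "\<bar>mat_pow S Q n x z * Q z y\<bar> \<le> K ^ n * R" by (simp add: abs_mult)
  qed
  also have "\<dots> = K ^ n * (real (card S) * R)" by simp
  also have "\<dots> \<le> K ^ n * K" unfolding K_def
    by (intro mult_left_mono) auto
  finally show ?case unfolding K_def by (simp add: mult.commute)
qed

lemma trans_summable:
  fixes Q :: "'s \<Rightarrow> 's \<Rightarrow> real"
  assumes fin: "finite S" and R: "\<And>x y. \<bar>Q x y\<bar> \<le> R"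
  shows "summable (\<lambda>n. t ^ n / fact n * mat_pow S Q n x y)"
proof -
  define K where "K = max 1 (real (card S) * R)"
  have "summable (\<lambda>n. inverse (fact n) * (\<bar>t\<bar> * K) ^ n)" by (rule summable_exp)
  then show ?thesis
  proof (rule summable_comparison_test[rotated], intro exI allI impI)
    fix n :: nat
    have b: "\<bar>mat_pow S Q n x y\<bar> \<le> K ^ n" using mat_pow_bound[OF fin R] unfolding K_def .
    have "norm (t ^ n / fact n * mat_pow S Q n x y) = \<bar>t\<bar> ^ n / fact n * \<bar>mat_pow S Q n x y\<bar>"
      by (simp add: abs_mult power_abs)
    also have "\<dots> \<le> \<bar>t\<bar> ^ n / fact n * K ^ n"
      by (intro mult_left_mono b) auto
    also have "\<dots> = inverse (fact n) * (\<bar>t\<bar> * K) ^ n"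
      by (simp add: power_mult_distrib field_simps)
    finally show "norm (t ^ n / fact n * mat_pow S Q n x y) \<le> inverse (fact n) * (\<bar>t\<bar> * K) ^ n" .
  qed
qed

locale lump =
  fixes S :: "'s set" and S' :: "'t set" and Q :: "'s \<Rightarrow> 's \<Rightarrow> real"
    and Q' :: "'t \<Rightarrow> 't \<Rightarrow> real" and p :: "'s \<Rightarrow> 't" and R :: real
  assumes finS: "finite S" and img: "p ` S = S'"
    and bnd: "\<And>x y. \<bar>Q x y\<bar> \<le> R"
    and gen: "\<And>u w. u \<in> S \<Longrightarrow> (\<Sum>z\<in>{z\<in>S. p z = w}. Q u z) = Q' (p u) w"
begin

lemma regroup:
  fixes g :: "'s \<Rightarrow> real" and h :: "'t \<Rightarrow> real"
  shows "(\<Sum>u\<in>S. g u * h (p u)) = (\<Sum>v\<in>S'. (\<Sum>u\<in>{u\<in>S. p u = v}. g u) * h v)"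
proof -
  have "(\<Sum>u\<in>S. g u * h (p u)) = (\<Sum>v\<in>p ` S. (\<Sum>u\<in>{u\<in>S. p u = v}. g u * h (p u)))"
    by (rule sum.image_gen[OF finS])
  also have "\<dots> = (\<Sum>v\<in>S'. (\<Sum>u\<in>{u\<in>S. p u = v}. g u) * h v)"
  proof (unfold img, intro sum.cong refl)
    fix v assume "v \<in> S'"
    have "(\<Sum>u\<in>{u\<in>S. p u = v}. g u * h (p u)) = (\<Sum>u\<in>{u\<in>S. p u = v}. g u * h v)"
      by (intro sum.cong refl) auto
    then show "(\<Sum>u\<in>{u\<in>S. p u = v}. g u * h (p u)) = (\<Sum>u\<in>{u\<in>S. p u = v}. g u) * h v"
      by (simp add: sum_distrib_right)
  qed
  finally show ?thesis .
qed

lemma pow_lump: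
  assumes "z \<in> S"
  shows "(\<Sum>y\<in>{y\<in>S. p y = w}. mat_pow S Q n z y) = mat_pow S' Q' n (p z) w"
proof (induction n arbitrary: w)
  case 0
  have "(\<Sum>y\<in>{y\<in>S. p y = w}. (if z = y then 1 else 0 :: real)) = (if z \<in> {y\<in>S. p y = w} then 1 else 0)"
    using finS by (simp add: sum.delta[OF finite_subset[OF _ finS]])
  then show ?case using assms by auto
next
  case (Suc n)
  have "(\<Sum>y\<in>{y\<in>S. p y = w}. mat_pow S Q (Suc n) z y)
      = (\<Sum>y\<in>{y\<in>S. p y = w}. \<Sum>u\<in>S. mat_pow S Q n z u * Q u y)"
    by (simp add: mat_mult_def)
  also have "\<dots> = (\<Sum>u\<in>S. mat_pow S Q n z u * (\<Sum>y\<in>{y\<in>S. p y = w}. Q u y))"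
    by (subst sum.swap) (simp add: sum_distrib_left)
  also have "\<dots> = (\<Sum>u\<in>S. mat_pow S Q n z u * Q' (p u) w)"
    by (intro sum.cong refl) (simp add: gen)
  also have "\<dots> = (\<Sum>v\<in>S'. (\<Sum>u\<in>{u\<in>S. p u = v}. mat_pow S Q n z u) * Q' v w)"
    by (rule regroup)
  also have "\<dots> = (\<Sum>v\<in>S'. mat_pow S' Q' n (p z) v * Q' v w)"
    using Suc.IH by simp
  also have "\<dots> = mat_pow S' Q' (Suc n) (p z) w" by (simp add: mat_mult_def)
  finally show ?case .
qed

lemma trans_lump:
  assumes "z \<in> S"
  shows "(\<Sum>y\<in>{y\<in>S. p y = w}. trans_sg S Q t z y) = trans_sg S' Q' t (p z) w"
proof -
  have "(\<Sum>y\<in>{y\<in>S. p y = w}. trans_sg S Q t z y)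
      = (\<Sum>n. \<Sum>y\<in>{y\<in>S. p y = w}. t ^ n / fact n * mat_pow S Q n z y)"
    unfolding trans_sg_def
    by (rule suminf_sum[symmetric]) (rule trans_summable[OF finS bnd])
  also have "\<dots> = (\<Sum>n. t ^ n / fact n * mat_pow S' Q' n (p z) w)"
    by (simp add: sum_distrib_left[symmetric] pow_lump[OF assms] del: times_divide_eq_left)
  finally show ?thesis unfolding trans_sg_def .
qed

lemma fdd_lump:
  assumes "z \<in> S"
  shows "fdd S Q z s (map (\<lambda>(t, A). (t, p -` A)) obs) = fdd S' Q' (p z) s obs"
  using assms
proof (induction obs arbitrary: z s)
  case Nil
  then show ?case by simp
next
  case (Cons a obs)
  obtain t A where a: "a = (t, A)" by (cases a)
  have "fdd S Q z s (map (\<lambda>(t, A). (t, p -` A)) (a # obs))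
      = (\<Sum>y\<in>S \<inter> p -` A. trans_sg S Q (t - s) z y * fdd S' Q' (p y) t obs)"
    using Cons.IH by (simp add: a)
  also have "\<dots> = (\<Sum>v\<in>p ` (S \<inter> p -` A). \<Sum>y\<in>{y\<in>S \<inter> p -` A. p y = v}. trans_sg S Q (t - s) z y * fdd S' Q' (p y) t obs)"
    using finS by (intro sum.image_gen) auto
  also have "\<dots> = (\<Sum>v\<in>S' \<inter> A. (\<Sum>y\<in>{y\<in>S. p y = v}. trans_sg S Q (t - s) z y) * fdd S' Q' v t obs)"
  proof -
    have "p ` (S \<inter> p -` A) = S' \<inter> A" using img by auto
    moreover have "\<And>v. v \<in> A \<Longrightarrow> {y\<in>S \<inter> p -` A. p y = v} = {y\<in>S. p y = v}" by auto
    ultimately show ?thesis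
      by (simp add: sum_distrib_right)
  qed
  also have "\<dots> = fdd S' Q' (p z) s (a # obs)"
    using trans_lump[OF Cons.prems] by (simp add: a)
  finally show ?case .
qed

end


lemma clock_gen_bound: "\<bar>clock_gen cs x y\<bar> \<le> (\<Sum>(r, T)\<leftarrow>cs. \<bar>r\<bar>)"
proof (induction cs)
  case Nil
  then show ?case by (simp add: clock_gen_def)
next
  case (Cons c cs)
  obtain r T where c: "c = (r, T)" by (cases c)
  have "\<bar>r * (ind (T x = y) - ind (x = y))\<bar> \<le> \<bar>r\<bar>"
    by (auto simp: ind_def)
  then show ?case using Cons.IH unfolding clock_gen_def c by simp
qed

lemma clock_gen_Cons: "clock_gen ((r, T) # cs) x y = r * (ind (T x = y) - ind (x = y)) + clock_gen cs x y"
  by (simp add: clock_gen_def)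

lemma clock_lump:
  assumes "list_all2 (\<lambda>(r, T) (r', T'). r = r' \<and> (T z \<in> S) \<and> p (T z) = T' (p z)) cs cs'"
    and "finite S" and "z \<in> S"
  shows "(\<Sum>y\<in>{y\<in>S. p y = w}. clock_gen cs z y) = clock_gen cs' (p z) w"
  using assms(1)
proof (induction rule: list_all2_induct)
  case Nil
  then show ?case by (simp add: clock_gen_def)
next
  case (Cons c cs c' cs')
  obtain r T where c: "c = (r, T)" by (cases c)
  obtain r' T' where c': "c' = (r', T')" by (cases c')
  have h: "r = r'" "T z \<in> S" "p (T z) = T' (p z)" using Cons.hyps(1) c c' by auto
  have fin: "finite {y\<in>S. p y = w}" using assms(2) by auto
  have "(\<Sum>y\<in>{y\<in>S. p y = w}. r * (ind (T z = y) - ind (z = y)))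
     = r * ((\<Sum>y\<in>{y\<in>S. p y = w}. ind (T z = y)) - (\<Sum>y\<in>{y\<in>S. p y = w}. ind (z = y)))"
    by (simp add: sum_distrib_left sum_subtractf right_diff_distrib)
  also have "\<dots> = r' * (ind (T' (p z) = w) - ind (p z = w))"
    using fin h assms(3) by (simp add: ind_def sum.delta)
  finally show ?case
    unfolding c c' clock_gen_Cons using Cons.IH by (simp add: sum.distrib)
qed

lemma list_all2_concat_map:
  "(\<And>i. i \<in> set xs \<Longrightarrow> list_all2 P (f i) (g i)) \<Longrightarrow> list_all2 P (concat (map f xs)) (concat (map g xs))"
  by (induction xs) (auto intro: list_all2_appendI)

lemma species_UNIV: "(UNIV :: species set) = {Fst, Snd, Thd, Hole}"
  using species.exhaust by auto

lemma finite_ms_states: "finite (ms_states N)"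
proof -
  have "finite {xs. set xs \<subseteq> (UNIV :: species set) \<and> length xs = N}"
    by (rule finite_lists_length_eq) (simp add: species_UNIV)
  then show ?thesis unfolding ms_states_def by simp
qed

lemma proj_img: "proj ` ms_states N = asep_states N"
proof
  show "proj ` ms_states N \<subseteq> asep_states N"
    by (auto simp: ms_states_def asep_states_def proj_def)
  show "asep_states N \<subseteq> proj ` ms_states N"
  proof
    fix w assume "w \<in> asep_states N"
    have "proj (map (\<lambda>b. if b then Fst else Hole) w) = w"
      by (induction w) (auto simp: proj_def)
    moreover have "map (\<lambda>b. if b then Fst else Hole) w \<in> ms_states N"
      using \<open>w \<in> asep_states N\<close> by (auto simp: asep_states_def ms_states_def)
    ultimately
    show "w \<in> proj ` ms_states N" by (metis imageI)
  qed
qed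

lemma swap_at_id: "xs ! i = xs ! Suc i \<Longrightarrow> swap_at i xs = xs"
  by (metis list_update_id swap_at_def)

lemma len_right: "length (ms_right i z) = length z"
  by (simp add: ms_right_def swap_at_def)

lemma len_left: "length (ms_left i z) = length z"
  by (simp add: ms_left_def swap_at_def)

lemma proj_swap: "Suc i < length z \<Longrightarrow> proj (swap_at i z) = swap_at i (proj z)"
  by (simp add: swap_at_def proj_def map_update)

lemma len_swap: "length (swap_at i z) = length z"
  by (simp add: swap_at_def)

lemma proj_nth: "i < length z \<Longrightarrow> proj z ! i = (z ! i = Fst \<or> z ! i = Snd)"
  by (simp add: proj_def)

lemma proj_right: "Suc i < length z \<Longrightarrow> proj (ms_right i z) = as_right i (proj z)"
  unfolding ms_right_def as_right_def
  by (cases "z ! i"; cases "z ! Suc i")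
     (auto simp: pgt_def proj_swap proj_nth swap_at_id)

lemma proj_left: "Suc i < length z \<Longrightarrow> proj (ms_left i z) = as_left i (proj z)"
  unfolding ms_left_def as_left_def
  by (cases "z ! i"; cases "z ! Suc i")
     (auto simp: pgt_def proj_swap proj_nth swap_at_id)

lemma proj_alpha: "proj (ms_alpha z) = as_create (proj z)"
  by (cases z; simp add: proj_def split: species.split)

lemma proj_gamma: "proj (ms_gamma z) = as_remove (proj z)"
  by (cases z; simp add: proj_def split: species.split)

lemma len_alpha: "length (ms_alpha z) = length z"
  by (cases z; simp split: species.split)

lemma len_gamma: "length (ms_gamma z) = length z"
  by (cases z; simp split: species.split)

lemma gen_rel:
  assumes "z \<in> ms_states N"
  shows "list_all2 (\<lambda>(r, T) (r', T'). r = r' \<and> (T z \<in> ms_states N) \<and> proj (T z) = T' (proj z))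
    (concat (map (\<lambda>i. [(1, ms_right i), (q, ms_left i)]) [0..<N - 1])
      @ [(\<alpha>, ms_alpha), (\<gamma>, ms_gamma)])
    (concat (map (\<lambda>i. [(1, as_right i), (q, as_left i)]) [0..<N - 1])
      @ [(\<alpha>, as_create), (\<gamma>, as_remove)])"
  using assms
  by (intro list_all2_appendI list_all2_concat_map)
     (auto simp: ms_states_def len_right len_left proj_right proj_left
        proj_alpha proj_gamma len_alpha len_gamma)

theorem lemma2p1:
  fixes N :: nat and q \<alpha> \<gamma> :: real
    and z0 :: "species list" and obs :: "(real \<times> bool list set) list"
  assumes "0 < q" "q < 1" "\<gamma> > 0" "\<alpha> > \<gamma>"
    and "z0 \<in> ms_states N"
    and "sorted (map fst obs)" "\<forall>p\<in>set obs. 0 \<le> fst p"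
  shows "fdd (ms_states N) (ms_gen N q \<alpha> \<gamma>) z0 0 (map (\<lambda>(t, A). (t, proj -` A)) obs)
       = fdd (asep_states N) (asep_gen N q \<alpha> \<gamma>) (proj z0) 0 obs"
proof -
  interpret L: lump "ms_states N" "asep_states N" "ms_gen N q \<alpha> \<gamma>" "asep_gen N q \<alpha> \<gamma>" proj
    "\<Sum>(r, T)\<leftarrow>(concat (map (\<lambda>i. [(1, ms_right i), (q, ms_left i)]) [0..<N - 1])
      @ [(\<alpha>, ms_alpha), (\<gamma>, ms_gamma)]). \<bar>r\<bar>"
  proof
    show "finite (ms_states N)" by (rule finite_ms_states)
    show "proj ` ms_states N = asep_states N" by (rule proj_img)
    show "\<bar>ms_gen N q \<alpha> \<gamma> x y\<bar> \<le> (\<Sum>(r, T)\<leftarrow>(concat (map (\<lambda>i. [(1, ms_right i), (q, ms_left i)]) [0..<N - 1])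
      @ [(\<alpha>, ms_alpha), (\<gamma>, ms_gamma)]). \<bar>r\<bar>)" for x y
      unfolding ms_gen_def by (rule clock_gen_bound)
    show "(\<Sum>z\<in>{z\<in>ms_states N. proj z = w}. ms_gen N q \<alpha> \<gamma> u z) = asep_gen N q \<alpha> \<gamma> (proj u) w"
      if "u \<in> ms_states N" for u w
      unfolding ms_gen_def asep_gen_def
      by (rule clock_lump[OF gen_rel[OF that] finite_ms_states that])
  qed
  show ?thesis by (rule L.fdd_lump[OF assms(5)])
qed

end
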